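(* Suppose that $\mathcal X$ is a wide family of subsets of $\mathbb N$ and $\mathfrak A=(\alpha_X:X\in\mathcal X)$ with $\alpha_X\in(71/72,1]$ for all $X\in\mathcal X$. Then any two elements $S,T\in\mathcal M_{\mathcal X,\mathfrak A}$ almost commute, i.e., $ST-TS\in\mathcal K(\ell_2)$.
   Context: Fix an orthonormal basis $(e_k)$ of $\ell_2$. For $A\subseteq\mathbb N$, $P_A$ is the projection onto $\overline{\mathrm{span}}\{e_{2k},e_{2k+1}:k\in A\}$; $H_n=\mathrm{span}\{e_{2n},e_{2n+1}\}$. $\mathcal A_0$ is the set of $T\in\mathcal B(\ell_2)$ with $\langle Te_k,e_m\rangle\ne0\Rightarrow\{k,m\}\subseteq\{2n,2n+1\}$ for some $n$, written $T=(T_n)$, $T_n\in\mathcal B(H_n)$; $\mathcal A_0(X)=\{T\in\mathcal A_0:T_n=0\ \forall n\notin X\}$. For $\alpha\in(71/72,1]$, $f_{\alpha,2n}=\alpha e_{2n}+\sqrt{1-\alpha^2}e_{2n+1}$, $f_{\alpha,2n+1}=\sqrt{1-\alpha^2}e_{2n}-\alpha e_{2n+1}$; $\mathcal D(X,\alpha)$: $T\in\mathcal A_0(X)$ with $T_n$ diagonal in $\{f_{\alpha,2n},f_{\alpha,2n+1}\}$ for $n\in X$; $\mathcal D_{\mathcal K}(X,\alpha)=\{S+R:S\in\mathcal D(X,\alpha),R\in\mathcal K(\ell_2)\cap\mathcal A_0(X)\}$. $\mathcal M_{\mathcal X,\mathfrak A}=\{T\in\mathcal A_0:P_XTP_X\in\mathcal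 D_{\mathcal K}(X,\alpha_X)\ \forall X\in\mathcal X\}$. $\mathcal X$ is wide if every infinite subset of $\mathbb N$ has infinite intersection with some member of $\mathcal X$. *)

theory Defs
  imports "HOL-Analysis.Analysis"
begin

text \<open>Complex l2(N) is modelled concretely: vectors are functions nat => complex,
  l2 is the set of square-summable ones; operators are functions on vectors whose
  values are only relevant on l2.\<close>

definition l2 :: "(nat \<Rightarrow> complex) set" where
  "l2 = {x. summable (\<lambda>n. (cmod (x n))\<^sup>2)}"

definition l2norm :: "(nat \<Rightarrow> complex) \<Rightarrow> real" where
  "l2norm x = sqrt (\<Sum>n. (cmod (x n))\<^sup>2)"

definition ebasis :: "nat \<Rightarrow> nat \<Rightarrow> complex" where
  "ebasis k = (\<lambda>n. if n = k then 1 else 0)"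

definition bounded_op :: "((nat \<Rightarrow> complex) \<Rightarrow> (nat \<Rightarrow> complex)) \<Rightarrow> bool" where
  "bounded_op T \<longleftrightarrow>
     (\<forall>x\<in>l2. T x \<in> l2) \<and>
     (\<forall>x\<in>l2. \<forall>y\<in>l2. T (\<lambda>n. x n + y n) = (\<lambda>n. T x n + T y n)) \<and>
     (\<forall>x\<in>l2. \<forall>c::complex. T (\<lambda>n. c * x n) = (\<lambda>n. c * T x n)) \<and>
     (\<exists>C. \<forall>x\<in>l2. l2norm (T x) \<le> C * l2norm x)"

definition compact_op :: "((nat \<Rightarrow> complex) \<Rightarrow> (nat \<Rightarrow> complex)) \<Rightarrow> bool" where
  "compact_op T \<longleftrightarrow> bounded_op T \<and>
     (\<forall>x :: nat \<Rightarrow> nat \<Rightarrow> complex. (\<forall>k. x k \<in> l2 \<and> l2norm (x k) \<le> 1) \<longrightarrow>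
        (\<exists>r y. strict_mono r \<and> y \<in> l2 \<and> (\<lambda>k. l2norm (\<lambda>n. T (x (r k)) n - y n)) \<longlonglongrightarrow> 0))"

definition Pproj :: "nat set \<Rightarrow> (nat \<Rightarrow> complex) \<Rightarrow> (nat \<Rightarrow> complex)" where
  "Pproj A x = (\<lambda>m. if m div 2 \<in> A then x m else 0)"

text \<open>A_0: bounded operators with \<langle>T e_k, e_m\<rangle> \<noteq> 0 only if {k,m} \<subseteq> {2n,2n+1};
  note \<langle>T e_k, e_m\<rangle> = (T e_k) m\<close>
definition A0 :: "((nat \<Rightarrow> complex) \<Rightarrow> (nat \<Rightarrow> complex)) set" where
  "A0 = {T. bounded_op T \<and>
          (\<forall>k m. T (ebasis k) m \<noteq> 0 \<longrightarrow> (\<exists>n. {k, m} \<subseteq> {2*n, 2*n+1}))}"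

definition A0X :: "nat set \<Rightarrow> ((nat \<Rightarrow> complex) \<Rightarrow> (nat \<Rightarrow> complex)) set" where
  "A0X X = {T. T \<in> A0 \<and> (\<forall>n. n \<notin> X \<longrightarrow> T (ebasis (2*n)) = (\<lambda>_. 0) \<and> T (ebasis (2*n+1)) = (\<lambda>_. 0))}"

definition fvec :: "real \<Rightarrow> nat \<Rightarrow> nat \<Rightarrow> complex" where
  "fvec \<alpha> k = (if even k
      then (\<lambda>m. complex_of_real \<alpha> * ebasis k m + complex_of_real (sqrt (1 - \<alpha>\<^sup>2)) * ebasis (k+1) m)
      else (\<lambda>m. complex_of_real (sqrt (1 - \<alpha>\<^sup>2)) * ebasis (k-1) m - complex_of_real \<alpha> * ebasis k m))"

definition Dset :: "nat set \<Rightarrow> real \<Rightarrow> ((nat \<Rightarrow> complex) \<Rightarrow> (nat \<Rightarrow> complex)) set" where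
  "Dset X \<alpha> = {T. T \<in> A0X X \<and>
     (\<forall>n\<in>X. (\<exists>c::complex. T (fvec \<alpha> (2*n)) = (\<lambda>m. c * fvec \<alpha> (2*n) m)) \<and>
             (\<exists>\<mu>::complex. T (fvec \<alpha> (2*n+1)) = (\<lambda>m. \<mu> * fvec \<alpha> (2*n+1) m)))}"

definition DKset :: "nat set \<Rightarrow> real \<Rightarrow> ((nat \<Rightarrow> complex) \<Rightarrow> (nat \<Rightarrow> complex)) set" where
  "DKset X \<alpha> = {T. \<exists>S R. S \<in> Dset X \<alpha> \<and> compact_op R \<and> R \<in> A0X X \<and>
                        (\<forall>x\<in>l2. T x = (\<lambda>n. S x n + R x n))}"

definition Mset :: "nat set set \<Rightarrow> (nat set \<Rightarrow> real) \<Rightarrow> ((nat \<Rightarrow> complex) \<Rightarrow> (nat \<Rightarrow> complex)) set" where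
  "Mset \<X> \<alpha> = {T. T \<in> A0 \<and> (\<forall>X\<in>\<X>. (\<lambda>x. Pproj X (T (Pproj X x))) \<in> DKset X (\<alpha> X))}"

definition wide :: "nat set set \<Rightarrow> bool" where
  "wide \<X> \<longleftrightarrow> (\<forall>A. infinite A \<longrightarrow> (\<exists>X\<in>\<X>. infinite (A \<inter> X)))"

end

theory Submission
  imports Defs "HOL-Library.Diagonal_Subsequence"
begin

lemma l2_summable: "x \<in> l2 \<Longrightarrow> summable (\<lambda>n. (cmod (x n))\<^sup>2)"
  by (simp add: l2_def)

lemma l2norm_sq: "x \<in> l2 \<Longrightarrow> (l2norm x)\<^sup>2 = (\<Sum>n. (cmod (x n))\<^sup>2)"
  unfolding l2norm_def by (simp add: l2_def suminf_nonneg)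

lemma l2norm_nonneg: "x \<in> l2 \<Longrightarrow> 0 \<le> l2norm x"
  unfolding l2norm_def by (simp add: l2_def suminf_nonneg)

lemma l2_partial_le:
  assumes "x \<in> l2" "finite F"
  shows "(\<Sum>m\<in>F. (cmod (x m))\<^sup>2) \<le> (l2norm x)\<^sup>2"
  unfolding l2norm_sq[OF assms(1)]
  by (rule sum_le_suminf) (use assms l2_summable in auto)

lemma l2_coord_le:
  assumes "x \<in> l2" shows "cmod (x m) \<le> l2norm x"
proof -
  have "(cmod (x m))\<^sup>2 \<le> (l2norm x)\<^sup>2" using l2_partial_le[OF assms, of "{m}"] by simp
  then show ?thesis using l2norm_nonneg[OF assms] by (rule power2_le_imp_le)
qed

lemma l2I_bound:
  assumes "\<And>M. (\<Sum>m<M. (cmod (x m))\<^sup>2) \<le> K"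
  shows "x \<in> l2" "(l2norm x)\<^sup>2 \<le> K"
proof -
  show s: "x \<in> l2" unfolding l2_def
    by (auto intro!: summableI_nonneg_bounded[where x=K] assms)
  show "(l2norm x)\<^sup>2 \<le> K" unfolding l2norm_sq[OF s]
    by (rule suminf_le_const) (use s l2_summable assms in auto)
qed

lemma sq_diff_le: "(cmod (a - b))\<^sup>2 \<le> 2 * (cmod a)\<^sup>2 + 2 * (cmod b)\<^sup>2"
proof -
  have "cmod (a - b) \<le> cmod a + cmod b" by (rule norm_triangle_ineq4)
  hence "(cmod (a - b))\<^sup>2 \<le> (cmod a + cmod b)\<^sup>2" by (simp add: power_mono)
  also have "\<dots> \<le> 2 * (cmod a)\<^sup>2 + 2 * (cmod b)\<^sup>2"
    using zero_le_power2[of "cmod a - cmod b"] by (simp add: power2_eq_square algebra_simps)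
  finally show ?thesis .
qed

lemma sq_add_le: "(cmod (a + b))\<^sup>2 \<le> 2 * (cmod a)\<^sup>2 + 2 * (cmod b)\<^sup>2"
  using sq_diff_le[of a "-b"] by simp

lemma l2_diff: assumes "x \<in> l2" "y \<in> l2" shows "(\<lambda>n. x n - y n) \<in> l2"
  unfolding l2_def mem_Collect_eq
proof (rule summable_comparison_test[OF _ summable_add[OF summable_mult[OF l2_summable[OF assms(1)]] summable_mult[OF l2_summable[OF assms(2)]]]])
  show "\<exists>N. \<forall>n\<ge>N. norm ((cmod (x n - y n))\<^sup>2) \<le> 2 * (cmod (x n))\<^sup>2 + 2 * (cmod (y n))\<^sup>2"
    using sq_diff_le by auto
qed

lemma l2_add: assumes "x \<in> l2" "y \<in> l2" shows "(\<lambda>n. x n + y n) \<in> l2"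
  using l2_diff[OF assms(1), of "\<lambda>n. - y n"] assms(2) by (simp add: l2_def)

lemma l2_scale: assumes "x \<in> l2" shows "(\<lambda>n. c * x n) \<in> l2"
  using summable_mult[OF l2_summable[OF assms], of "(cmod c)\<^sup>2"]
  by (simp add: l2_def norm_mult power_mult_distrib)

lemma l2_trunc: assumes "x \<in> l2" shows "(\<lambda>k. if P k then x k else 0) \<in> l2"
  unfolding l2_def mem_Collect_eq
  by (rule summable_comparison_test[OF _ l2_summable[OF assms]]) auto

lemma ebasis_l2: "ebasis k \<in> l2"
proof -
  have "(\<lambda>n. (cmod (ebasis k n))\<^sup>2) = (\<lambda>n. if n = k then 1 else 0)"
    by (auto simp: ebasis_def)
  then show ?thesis unfolding l2_def using sums_single[of k "\<lambda>_. 1::real"] sums_summable by auto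
qed

lemma l2norm_ebasis: "l2norm (ebasis k) = 1"
proof -
  have "(\<lambda>n. (cmod (ebasis k n))\<^sup>2) = (\<lambda>n. if n = k then 1 else 0)"
    by (auto simp: ebasis_def)
  moreover have "(\<Sum>n. if n = k then 1 else 0) = (1::real)" using sums_single[of k "\<lambda>_. 1::real"] sums_unique by fastforce
  ultimately show ?thesis unfolding l2norm_def by simp
qed

lemma bounded_opD:
  assumes "bounded_op T"
  shows "\<exists>C\<ge>0. \<forall>x\<in>l2. T x \<in> l2 \<and> l2norm (T x) \<le> C * l2norm x"
proof -
  obtain C where C: "\<forall>x\<in>l2. l2norm (T x) \<le> C * l2norm x" using assms by (auto simp: bounded_op_def)
  have "\<forall>x\<in>l2. l2norm (T x) \<le> max C 0 * l2norm x"
  proof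
    fix x assume x: "x \<in> l2"
    have "C * l2norm x \<le> max C 0 * l2norm x" by (rule mult_right_mono) (auto simp: l2norm_nonneg[OF x])
    then show "l2norm (T x) \<le> max C 0 * l2norm x" using C x by force
  qed
  moreover have "\<forall>x\<in>l2. T x \<in> l2" using assms by (auto simp: bounded_op_def)
  moreover have "max C 0 \<ge> 0" by simp
  ultimately show ?thesis by blast
qed

definition blockop :: "((nat \<Rightarrow> complex) \<Rightarrow> (nat \<Rightarrow> complex)) \<Rightarrow> bool" where
  "blockop T \<longleftrightarrow> (\<forall>k m. T (ebasis k) m \<noteq> 0 \<longrightarrow> k div 2 = m div 2)"

lemma A0_blockop: "T \<in> A0 \<Longrightarrow> blockop T"
  unfolding A0_def blockop_def by force

lemma A0_bounded: "T \<in> A0 \<Longrightarrow> bounded_op T"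
  unfolding A0_def by auto

lemma bop_add: "bounded_op T \<Longrightarrow> x \<in> l2 \<Longrightarrow> y \<in> l2 \<Longrightarrow> T (\<lambda>n. x n + y n) = (\<lambda>n. T x n + T y n)"
  unfolding bounded_op_def by blast

lemma bop_scale: "bounded_op T \<Longrightarrow> x \<in> l2 \<Longrightarrow> T (\<lambda>n. c * x n) = (\<lambda>n. c * T x n)"
  unfolding bounded_op_def by blast

lemma bop_l2: "bounded_op T \<Longrightarrow> x \<in> l2 \<Longrightarrow> T x \<in> l2"
  unfolding bounded_op_def by blast

lemma bop_trunc_sum:
  assumes T: "bounded_op T" and x: "x \<in> l2"
  shows "T (\<lambda>k. if k < N then x k else 0) = (\<lambda>m. \<Sum>k<N. x k * T (ebasis k) m)"
proof (induction N)
  case 0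
  have "(\<lambda>k. if k < (0::nat) then x k else 0) = (\<lambda>n. 0 * ebasis 0 n)" by auto
  then show ?case using bop_scale[OF T ebasis_l2, of 0 0] by simp
next
  case (Suc N)
  have e: "(\<lambda>k. if k < Suc N then x k else 0) = (\<lambda>n. (\<lambda>k. if k < N then x k else 0) n + (\<lambda>n. x N * ebasis N n) n)"
    by (auto simp: ebasis_def less_Suc_eq)
  show ?case unfolding e
    by (subst bop_add[OF T l2_trunc[OF x] l2_scale[OF ebasis_l2]], subst bop_scale[OF T ebasis_l2])
       (simp add: Suc.IH)
qed

lemma l2_tail_to_0:
  assumes x: "x \<in> l2"
  shows "(\<lambda>N. l2norm (\<lambda>k. if k < N then 0 else x k)) \<longlonglongrightarrow> 0"
proof -
  define f where "f = (\<lambda>n. (cmod (x n))\<^sup>2)"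
  have sf: "summable f" using l2_summable[OF x] by (simp add: f_def)
  have eq: "l2norm (\<lambda>k. if k < N then 0 else x k) = sqrt (suminf f - (\<Sum>k<N. f k))" for N
  proof -
    have s2: "(\<lambda>k. if k \<in> {..<N} then f k else 0) sums (\<Sum>k\<in>{..<N}. f k)"
      by (rule sums_If_finite_set) simp
    have "(\<lambda>k. (cmod (if k < N then 0 else x k))\<^sup>2) = (\<lambda>k. f k - (if k \<in> {..<N} then f k else 0))"
      by (auto simp: f_def)
    moreover have "(\<Sum>k. f k - (if k \<in> {..<N} then f k else 0)) = suminf f - (\<Sum>k<N. f k)"
      using suminf_diff[OF sf sums_summable[OF s2]] sums_unique[OF s2] by simp
    ultimately show ?thesis unfolding l2norm_def by simp
  qed
  have "(\<lambda>N. sqrt (suminf f - (\<Sum>k<N. f k))) \<longlonglongrightarrow> sqrt (suminf f - suminf f)"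
    by (intro tendsto_intros summable_LIMSEQ sf)
  then show ?thesis unfolding eq by simp
qed

lemma bop_rep:
  assumes T: "bounded_op T" and B: "blockop T" and x: "x \<in> l2"
  shows "T x m = T (ebasis (2*(m div 2))) m * x (2*(m div 2)) + T (ebasis (2*(m div 2)+1)) m * x (2*(m div 2)+1)"
    (is "_ = ?v")
proof -
  define p where "p = m div 2"
  obtain C where C: "C \<ge> 0" "\<forall>x\<in>l2. T x \<in> l2 \<and> l2norm (T x) \<le> C * l2norm x"
    using bounded_opD[OF T] by blast
  define r where "r N = (\<lambda>k. if k < N then 0 else x k)" for N
  have rl2: "r N \<in> l2" for N proof -
    have "(\<lambda>k. if k < N then 0 else x k) = (\<lambda>k. if \<not> k < N then x k else 0)" by auto
    then show "r N \<in> l2" unfolding r_def using l2_trunc[OF x, of "\<lambda>k. \<not> k < N"] by simp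
  qed
  have key: "cmod (T x m - ?v) \<le> C * l2norm (r N)" if N: "N \<ge> 2*p+2" for N
  proof -
    have xe: "x = (\<lambda>n. (\<lambda>k. if k < N then x k else 0) n + r N n)" by (auto simp: r_def)
    have "T x = (\<lambda>n. T (\<lambda>k. if k < N then x k else 0) n + T (r N) n)"
      by (subst xe, rule bop_add[OF T l2_trunc[OF x] rl2])
    hence Tx: "T x m = (\<Sum>k<N. x k * T (ebasis k) m) + T (r N) m"
      using bop_trunc_sum[OF T x, of N] by (metis)
    have "(\<Sum>k<N. x k * T (ebasis k) m) = (\<Sum>k\<in>{2*p, 2*p+1}. x k * T (ebasis k) m)"
    proof (rule sum.mono_neutral_right)
      show "{2*p, 2*p+1} \<subseteq> {..<N}" using N by auto
      show "\<forall>i\<in>{..<N} - {2 * p, 2 * p + 1}. x i * T (ebasis i) m = 0"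
      proof
        fix i assume "i \<in> {..<N} - {2 * p, 2 * p + 1}"
        hence "i div 2 \<noteq> m div 2" unfolding p_def by auto
        thus "x i * T (ebasis i) m = 0" using B unfolding blockop_def by auto
      qed
    qed simp
    also have "\<dots> = ?v" by (simp add: p_def mult.commute)
    finally have "T x m - ?v = T (r N) m" using Tx by simp
    hence "cmod (T x m - ?v) \<le> l2norm (T (r N))" using l2_coord_le C(2) rl2 by metis
    also have "\<dots> \<le> C * l2norm (r N)" using C(2) rl2 by blast
    finally show ?thesis .
  qed
  have lim: "(\<lambda>N. C * l2norm (r N)) \<longlonglongrightarrow> C * 0"
    by (intro tendsto_intros) (use l2_tail_to_0[OF x] in \<open>simp add: r_def\<close>)
  have "cmod (T x m - ?v) \<le> C * 0"
    by (rule LIMSEQ_le_const[OF lim]) (use key in blast)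
  then show ?thesis by simp
qed

lemma diag_subseq:
  fixes z :: "nat \<Rightarrow> nat \<Rightarrow> complex"
  assumes bd: "\<And>k m. cmod (z k m) \<le> B"
  shows "\<exists>r. strict_mono r \<and> (\<forall>m. convergent (\<lambda>k. z (r k) m))"
proof -
  let ?P = "\<lambda>n. \<lambda>s. convergent (\<lambda>k. z (s k) n)"
  interpret nat: subseqs ?P
  proof (unfold subseqs_def, intro allI impI)
    fix n :: nat and s :: "nat\<Rightarrow>nat" assume s: "strict_mono s"
    have "bounded (range (\<lambda>k. z (s k) n))" unfolding bounded_iff using bd by blast
    then obtain l r where "strict_mono r" "((\<lambda>k. z (s k) n) \<circ> r) \<longlonglongrightarrow> l"
      using bounded_imp_convergent_subsequence by blast
    thus "\<exists>r'. strict_mono r' \<and> ?P n (s \<circ> r')"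
      by (auto simp: comp_def convergent_def)
  qed
  define d where "d = nat.diagseq"
  have subseq: "strict_mono d"
    unfolding d_def using nat.subseq_diagseq by auto
  have cnv: "?P n d" for n
  proof -
    have Pn_seqseq: "?P n (nat.seqseq (Suc n))"
      by (rule nat.seqseq_holds)
    have 1: "(\<lambda>k. z ((nat.seqseq (Suc n) \<circ> (\<lambda>k. nat.fold_reduce (Suc n) k
      (Suc n + k))) k) n) = (\<lambda>k. z (nat.seqseq (Suc n) k) n) \<circ>
      (\<lambda>k. nat.fold_reduce (Suc n) k (Suc n + k))"
      by auto
    have 2: "?P n (d \<circ> ((+) (Suc n)))"
      unfolding d_def nat.diagseq_seqseq 1
      by (intro convergent_subseq_convergent Pn_seqseq nat.subseq_diagonal_rest)
    then obtain L where 3: "(\<lambda>na. z (d (na + Suc n)) n) \<longlonglongrightarrow> L"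
      by (auto simp: add.commute dest: convergentD)
    then have "(\<lambda>k. z (d k) n) \<longlonglongrightarrow> L"
      by (rule LIMSEQ_offset)
    then show ?thesis
      by (auto simp: convergent_def)
  qed
  show ?thesis using subseq cnv by blast
qed

lemma split_sum_le:
  fixes f :: "nat \<Rightarrow> real"
  assumes "\<And>m. 0 \<le> f m"
  shows "(\<Sum>m<M. f m) \<le> (\<Sum>m<N. f m) + (\<Sum>m\<in>{N..<max M N}. f m)"
proof -
  have "(\<Sum>m<M. f m) \<le> (\<Sum>m<max M N. f m)"
    by (rule sum_mono2) (auto simp: assms)
  also have "{..<max M N} = {..<N} \<union> {N..<max M N}" by auto
  hence "(\<Sum>m<max M N. f m) = (\<Sum>m\<in>{..<N} \<union> {N..<max M N}. f m)" by simp
  also have "\<dots> = (\<Sum>m<N. f m) + (\<Sum>m\<in>{N..<max M N}. f m)"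
    by (rule sum.union_disjoint) auto
  finally show ?thesis .
qed

lemma compact_crit:
  assumes C: "bounded_op C"
    and tail: "\<And>\<epsilon>. \<epsilon> > 0 \<Longrightarrow> \<exists>N. \<forall>x\<in>l2. \<forall>M. (\<Sum>m\<in>{N..<M}. (cmod (C x m))\<^sup>2) \<le> \<epsilon> * (l2norm x)\<^sup>2"
  shows "compact_op C"
  unfolding compact_op_def
proof (intro conjI C allI impI)
  fix x :: "nat \<Rightarrow> nat \<Rightarrow> complex"
  assume xk: "\<forall>k. x k \<in> l2 \<and> l2norm (x k) \<le> 1"
  obtain B where B: "B \<ge> 0" "\<forall>x\<in>l2. C x \<in> l2 \<and> l2norm (C x) \<le> B * l2norm x"
    using bounded_opD[OF C] by blast
  define z where "z k = C (x k)" for k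
  have zl2: "z k \<in> l2" for k unfolding z_def using B xk by blast
  have zn: "l2norm (z k) \<le> B" for k
  proof -
    have "l2norm (z k) \<le> B * l2norm (x k)" unfolding z_def using B xk by blast
    also have "\<dots> \<le> B * 1" using xk B(1) by (intro mult_left_mono) auto
    finally show ?thesis by simp
  qed
  have zb: "cmod (z k m) \<le> B" for k m using l2_coord_le[OF zl2] zn order_trans by blast
  obtain r where r: "strict_mono r" "\<forall>m. convergent (\<lambda>k. z (r k) m)"
    using diag_subseq[of z B, OF zb] by blast
  define y where "y m = lim (\<lambda>k. z (r k) m)" for m
  have ylim: "(\<lambda>k. z (r k) m) \<longlonglongrightarrow> y m" for m unfolding y_def using r(2) convergent_LIMSEQ_iff by blast
  have slim: "(\<lambda>k. \<Sum>m\<in>F. (cmod (z (r k) m))\<^sup>2) \<longlonglongrightarrow> (\<Sum>m\<in>F. (cmod (y m))\<^sup>2)" for F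
    by (intro tendsto_intros ylim)
  have ybd: "(\<Sum>m<M. (cmod (y m))\<^sup>2) \<le> B\<^sup>2" for M
  proof (rule LIMSEQ_le_const2[OF slim], intro exI allI impI)
    fix k
    have "(\<Sum>m<M. (cmod (z (r k) m))\<^sup>2) \<le> (l2norm (z (r k)))\<^sup>2" by (rule l2_partial_le[OF zl2]) simp
    also have "\<dots> \<le> B\<^sup>2" using zn l2norm_nonneg[OF zl2] by (intro power_mono) auto
    finally show "(\<Sum>m<M. (cmod (z (r k) m))\<^sup>2) \<le> B\<^sup>2" .
  qed
  have yl2: "y \<in> l2" using l2I_bound(1)[OF ybd] .
  have conv: "(\<lambda>k. l2norm (\<lambda>n. z (r k) n - y n)) \<longlonglongrightarrow> 0"
    unfolding LIMSEQ_iff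
  proof (intro allI impI)
    fix e :: real assume e: "e > 0"
    define \<epsilon> where "\<epsilon> = e\<^sup>2 / 8"
    have \<epsilon>: "\<epsilon> > 0" using e by (simp add: \<epsilon>_def)
    obtain N where N: "\<forall>x\<in>l2. \<forall>M. (\<Sum>m\<in>{N..<M}. (cmod (C x m))\<^sup>2) \<le> \<epsilon> * (l2norm x)\<^sup>2"
      using tail[OF \<epsilon>] by blast
    have ztail: "(\<Sum>m\<in>{N..<M}. (cmod (z k m))\<^sup>2) \<le> \<epsilon>" for k M
    proof -
      have "(\<Sum>m\<in>{N..<M}. (cmod (z k m))\<^sup>2) \<le> \<epsilon> * (l2norm (x k))\<^sup>2" unfolding z_def using N xk by blast
      also have "\<dots> \<le> \<epsilon> * 1" using xk l2norm_nonneg \<epsilon>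
        by (intro mult_left_mono) (auto simp: power_le_one)
      finally show ?thesis by simp
    qed
    have ytail: "(\<Sum>m\<in>{N..<M}. (cmod (y m))\<^sup>2) \<le> \<epsilon>" for M
      by (rule LIMSEQ_le_const2[OF slim]) (use ztail in blast)
    have hlim: "(\<lambda>k. \<Sum>m<N. (cmod (z (r k) m - y m))\<^sup>2) \<longlonglongrightarrow> (\<Sum>m<N. (cmod (y m - y m))\<^sup>2)"
      by (intro tendsto_intros ylim)
    then obtain K where K: "\<forall>k\<ge>K. (\<Sum>m<N. (cmod (z (r k) m - y m))\<^sup>2) < \<epsilon>"
      using \<epsilon> unfolding LIMSEQ_iff by force
    show "\<exists>no. \<forall>k\<ge>no. norm (l2norm (\<lambda>n. z (r k) n - y n) - 0) < e"
    proof (intro exI allI impI)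
      fix k assume k: "k \<ge> K"
      define w where "w = (\<lambda>n. z (r k) n - y n)"
      have wl2: "w \<in> l2" unfolding w_def by (rule l2_diff[OF zl2 yl2])
      have "(\<Sum>m<M. (cmod (w m))\<^sup>2) \<le> 5 * \<epsilon>" for M
      proof -
        let ?M = "max M N"
        have "(\<Sum>m<M. (cmod (w m))\<^sup>2) \<le> (\<Sum>m<N. (cmod (w m))\<^sup>2) + (\<Sum>m\<in>{N..<?M}. (cmod (w m))\<^sup>2)"
          by (rule split_sum_le) simp
        also have "(\<Sum>m\<in>{N..<?M}. (cmod (w m))\<^sup>2) \<le> (\<Sum>m\<in>{N..<?M}. 2 * (cmod (z (r k) m))\<^sup>2 + 2 * (cmod (y m))\<^sup>2)"
          unfolding w_def by (rule sum_mono) (rule sq_diff_le)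
        also have "\<dots> = 2 * (\<Sum>m\<in>{N..<?M}. (cmod (z (r k) m))\<^sup>2) + 2 * (\<Sum>m\<in>{N..<?M}. (cmod (y m))\<^sup>2)"
          by (simp add: sum.distrib sum_distrib_left)
        also have "\<dots> \<le> 2 * \<epsilon> + 2 * \<epsilon>" using ztail[of "r k" ?M] ytail[of ?M] by linarith
        finally show ?thesis using K k unfolding w_def by force
      qed
      hence "(l2norm w)\<^sup>2 \<le> 5 * \<epsilon>" by (rule l2I_bound(2))
      also have "\<dots> < e\<^sup>2" using e by (simp add: \<epsilon>_def)
      finally have "(l2norm w)\<^sup>2 < e\<^sup>2" .
      hence "l2norm w < e" using e l2norm_nonneg[OF wl2] by (simp add: power_less_imp_less_base)
      thus "norm (l2norm (\<lambda>n. z (r k) n - y n) - 0) < e" using l2norm_nonneg[OF wl2] unfolding w_def by simp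
    qed
  qed
  show "\<exists>r y. strict_mono r \<and> y \<in> l2 \<and> (\<lambda>k. l2norm (\<lambda>n. C (x (r k)) n - y n)) \<longlonglongrightarrow> 0"
    using r(1) yl2 conv unfolding z_def by blast
qed

lemma eig_formula:
  fixes d :: "nat \<Rightarrow> nat \<Rightarrow> complex" and \<alpha> \<beta> :: real
  assumes h: "\<alpha>\<^sup>2 + \<beta>\<^sup>2 = 1"
    and e1: "of_real \<alpha> * d a 0 + of_real \<beta> * d a 1 = c * fa"
    and e2: "of_real \<beta> * d a 0 - of_real \<alpha> * d a 1 = \<mu> * ga"
  shows "d a 0 = c * of_real \<alpha> * fa + \<mu> * of_real \<beta> * ga"
    and "d a 1 = c * of_real \<beta> * fa - \<mu> * of_real \<alpha> * ga"
proof -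
  have h': "of_real \<alpha> * of_real \<alpha> + of_real \<beta> * of_real \<beta> = (1::complex)"
    using arg_cong[OF h, of "of_real :: real \<Rightarrow> complex"] by (simp add: power2_eq_square)
  have "d a 0 = (of_real \<alpha> * of_real \<alpha> + of_real \<beta> * of_real \<beta>) * d a 0" by (simp add: h')
  also have "\<dots> = of_real \<alpha> * (of_real \<alpha> * d a 0 + of_real \<beta> * d a 1) + of_real \<beta> * (of_real \<beta> * d a 0 - of_real \<alpha> * d a 1)"
    by (simp add: algebra_simps)
  also have "\<dots> = of_real \<alpha> * (c * fa) + of_real \<beta> * (\<mu> * ga)" by (simp only: e1 e2)
  finally show "d a 0 = c * of_real \<alpha> * fa + \<mu> * of_real \<beta> * ga" by (simp add: algebra_simps)
  have "d a 1 = (of_real \<alpha> * of_real \<alpha> + of_real \<beta> * of_real \<beta>) * d a 1" by (simp add: h')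
  also have "\<dots> = of_real \<beta> * (of_real \<alpha> * d a 0 + of_real \<beta> * d a 1) - of_real \<alpha> * (of_real \<beta> * d a 0 - of_real \<alpha> * d a 1)"
    by (simp add: algebra_simps)
  also have "\<dots> = of_real \<beta> * (c * fa) - of_real \<alpha> * (\<mu> * ga)" by (simp only: e1 e2)
  finally show "d a 1 = c * of_real \<beta> * fa - \<mu> * of_real \<alpha> * ga" by (simp add: algebra_simps)
qed

lemma comm_formula:
  fixes d d' :: "nat \<Rightarrow> nat \<Rightarrow> complex" and F G :: "nat \<Rightarrow> complex"
  assumes "\<forall>x<2. \<forall>y<2. d x y = c * F x * F y + \<mu> * G x * G y"
    and "\<forall>x<2. \<forall>y<2. d' x y = c' * F x * F y + \<mu>' * G x * G y"
    and "F 0 * G 0 + F 1 * G 1 = 0"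
    and "a < 2" "j < 2"
  shows "d a 0 * d' 0 j + d a 1 * d' 1 j = d' a 0 * d 0 j + d' a 1 * d 1 j"
proof -
  have o: "F 0 * G 0 = - (F 1 * G 1)" using assms(3) by (simp add: eq_neg_iff_add_eq_0)
  have "d a 0 * d' 0 j + d a 1 * d' 1 j - (d' a 0 * d 0 j + d' a 1 * d 1 j)
     = (c * \<mu>' - c' * \<mu>) * F a * G j * (F 0 * G 0 + F 1 * G 1) + (\<mu> * c' - \<mu>' * c) * G a * F j * (F 0 * G 0 + F 1 * G 1)"
    using assms(1,2,4,5) by (simp add: algebra_simps)
  also have "\<dots> = 0" using assms(3) by simp
  finally show ?thesis by simp
qed

lemma norm8: "cmod (a + b + c + d - e - f - g - h) \<le> cmod a + cmod b + cmod c + cmod d + cmod e + cmod f + cmod g + cmod h"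
proof -
  have "cmod (a + b + c + d - e - f - g - h) \<le> cmod (a + b + c + d - e - f - g) + cmod h" by (rule norm_triangle_ineq4)
  moreover have "cmod (a + b + c + d - e - f - g) \<le> cmod (a + b + c + d - e - f) + cmod g" by (rule norm_triangle_ineq4)
  moreover have "cmod (a + b + c + d - e - f) \<le> cmod (a + b + c + d - e) + cmod f" by (rule norm_triangle_ineq4)
  moreover have "cmod (a + b + c + d - e) \<le> cmod (a + b + c + d) + cmod e" by (rule norm_triangle_ineq4)
  moreover have "cmod (a + b + c + d) \<le> cmod (a + b + c) + cmod d" by (rule norm_triangle_ineq)
  moreover have "cmod (a + b + c) \<le> cmod (a + b) + cmod c" by (rule norm_triangle_ineq)
  moreover have "cmod (a + b) \<le> cmod a + cmod b" by (rule norm_triangle_ineq)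
  ultimately show ?thesis by linarith
qed

lemma comm_bound:
  fixes s t d d' r r' :: "nat \<Rightarrow> nat \<Rightarrow> complex"
  assumes st: "\<forall>x<2. \<forall>y<2. s x y = d x y + r x y \<and> t x y = d' x y + r' x y"
    and bd: "\<forall>x<2. \<forall>y<2. cmod (s x y) \<le> B \<and> cmod (t x y) \<le> B \<and> cmod (d x y) \<le> B \<and> cmod (d' x y) \<le> B"
    and sm: "\<forall>x<2. \<forall>y<2. cmod (r x y) \<le> \<eta> \<and> cmod (r' x y) \<le> \<eta>"
    and cm: "d a 0 * d' 0 j + d a 1 * d' 1 j = d' a 0 * d 0 j + d' a 1 * d 1 j"
    and aj: "a < 2" "j < 2"
  shows "cmod (s a 0 * t 0 j + s a 1 * t 1 j - (t a 0 * s 0 j + t a 1 * s 1 j)) \<le> 8 * B * \<eta>"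
proof -
  have eq: "s a 0 * t 0 j + s a 1 * t 1 j - (t a 0 * s 0 j + t a 1 * s 1 j)
    = d a 0 * r' 0 j + d a 1 * r' 1 j + r a 0 * t 0 j + r a 1 * t 1 j
      - d' a 0 * r 0 j - d' a 1 * r 1 j - r' a 0 * s 0 j - r' a 1 * s 1 j"
  proof -
    have "s a 0 * t 0 j + s a 1 * t 1 j - (t a 0 * s 0 j + t a 1 * s 1 j)
      = (d a 0 + r a 0) * t 0 j + (d a 1 + r a 1) * t 1 j - ((d' a 0 + r' a 0) * s 0 j + (d' a 1 + r' a 1) * s 1 j)"
      using st aj by simp
    also have "\<dots> = d a 0 * (d' 0 j + r' 0 j) + d a 1 * (d' 1 j + r' 1 j) + r a 0 * t 0 j + r a 1 * t 1 j
       - (d' a 0 * (d 0 j + r 0 j) + d' a 1 * (d 1 j + r 1 j)) - r' a 0 * s 0 j - r' a 1 * s 1 j"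
      using st aj by (simp add: algebra_simps)
    also have "\<dots> = (d a 0 * d' 0 j + d a 1 * d' 1 j) - (d' a 0 * d 0 j + d' a 1 * d 1 j)
       + d a 0 * r' 0 j + d a 1 * r' 1 j + r a 0 * t 0 j + r a 1 * t 1 j
      - d' a 0 * r 0 j - d' a 1 * r 1 j - r' a 0 * s 0 j - r' a 1 * s 1 j"
      by (simp add: algebra_simps)
    finally show ?thesis using cm by simp
  qed
  have p: "cmod (u * v) \<le> B * \<eta>" if "cmod u \<le> B" "cmod v \<le> \<eta>" for u v
  proof -
    have "cmod (u * v) = cmod u * cmod v" by (simp add: norm_mult)
    also have "\<dots> \<le> B * \<eta>"
    proof (rule mult_mono)
      show "0 \<le> B" using that(1) norm_ge_zero[of u] by linarith
    qed (use that in auto)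
    finally show ?thesis .
  qed
  have q: "cmod (v * u) \<le> B * \<eta>" if "cmod u \<le> B" "cmod v \<le> \<eta>" for u v
    using p[OF that] by (simp add: mult.commute)
  have z: "0 < (2::nat)" "1 < (2::nat)" by auto
  have t1: "cmod (d a 0 * r' 0 j) \<le> B * \<eta>" by (rule p) (use bd sm aj z in blast)+
  have t2: "cmod (d a 1 * r' 1 j) \<le> B * \<eta>" by (rule p) (use bd sm aj z in blast)+
  have t3: "cmod (r a 0 * t 0 j) \<le> B * \<eta>" by (rule q) (use bd sm aj z in blast)+
  have t4: "cmod (r a 1 * t 1 j) \<le> B * \<eta>" by (rule q) (use bd sm aj z in blast)+
  have t5: "cmod (d' a 0 * r 0 j) \<le> B * \<eta>" by (rule p) (use bd sm aj z in blast)+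
  have t6: "cmod (d' a 1 * r 1 j) \<le> B * \<eta>" by (rule p) (use bd sm aj z in blast)+
  have t7: "cmod (r' a 0 * s 0 j) \<le> B * \<eta>" by (rule q) (use bd sm aj z in blast)+
  have t8: "cmod (r' a 1 * s 1 j) \<le> B * \<eta>" by (rule q) (use bd sm aj z in blast)+
  show ?thesis unfolding eq
    by (rule order_trans[OF norm8]) (use t1 t2 t3 t4 t5 t6 t7 t8 in linarith)
qed

lemma compact_basis_to_0:
  assumes R: "compact_op R" and B: "blockop R"
  shows "(\<lambda>k. l2norm (R (ebasis k))) \<longlonglongrightarrow> 0"
proof (rule ccontr)
  have Rb: "bounded_op R" using R compact_op_def by blast
  have Rl2: "R (ebasis k) \<in> l2" for k using bop_l2[OF Rb ebasis_l2] .
  assume nt: "\<not> (\<lambda>k. l2norm (R (ebasis k))) \<longlonglongrightarrow> 0"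
  have nn: "norm (l2norm (R (ebasis n)) - 0) = l2norm (R (ebasis n))" for n
    using l2norm_nonneg[OF Rl2] by simp
  have "\<not> (\<forall>r>0. \<exists>no. \<forall>n\<ge>no. l2norm (R (ebasis n)) < r)"
    using nt unfolding LIMSEQ_iff nn .
  then obtain \<epsilon> where \<epsilon>: "\<epsilon> > 0" "\<forall>N. \<exists>k\<ge>N. \<epsilon> \<le> l2norm (R (ebasis k))"
    by (meson not_less)
  define A where "A = {k. \<epsilon> \<le> l2norm (R (ebasis k))}"
  have "infinite A" unfolding infinite_nat_iff_unbounded_le A_def using \<epsilon>(2) by blast
  from infinite_enumerate[OF this] obtain q :: "nat \<Rightarrow> nat" where q: "strict_mono q" "\<forall>n. q n \<in> A" by blast
  have hyp: "\<forall>k. ebasis (q k) \<in> l2 \<and> l2norm (ebasis (q k)) \<le> 1" by (simp add: ebasis_l2 l2norm_ebasis)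
  note cR = conjunct2[OF R[unfolded compact_op_def]]
  obtain r y where ry: "strict_mono r" "y \<in> l2"
    "(\<lambda>k. l2norm (\<lambda>n. R (ebasis (q (r k))) n - y n)) \<longlonglongrightarrow> 0"
    using mp[OF spec[OF cR, of "\<lambda>k. ebasis (q k)"] hyp] by blast
  define u where "u k = q (r k)" for k
  have um: "strict_mono u" unfolding u_def using q(1) ry(1) strict_mono_o[of q r] by (simp add: o_def)
  have y0: "y m = 0" for m
  proof -
    have d0: "(\<lambda>k. R (ebasis (u k)) m - y m) \<longlonglongrightarrow> 0"
    proof (rule Lim_null_comparison[OF _ ry(3)])
      show "\<forall>\<^sub>F k in sequentially. cmod (R (ebasis (u k)) m - y m) \<le> l2norm (\<lambda>n. R (ebasis (q (r k))) n - y n)"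
        using l2_coord_le[OF l2_diff[OF Rl2 ry(2)]] unfolding u_def by auto
    qed
    have "\<forall>\<^sub>F k in sequentially. R (ebasis (u k)) m = 0"
    proof (rule eventually_sequentiallyI[of "m+2"])
      fix k assume k: "m + 2 \<le> k"
      have "k \<le> u k" using seq_suble[OF um] .
      hence "u k div 2 \<noteq> m div 2" using k by auto
      thus "R (ebasis (u k)) m = 0" using B unfolding blockop_def by blast
    qed
    hence z0: "(\<lambda>k. R (ebasis (u k)) m) \<longlonglongrightarrow> 0" by (rule tendsto_eventually)
    have "(\<lambda>k. R (ebasis (u k)) m - (R (ebasis (u k)) m - y m)) \<longlonglongrightarrow> 0 - 0"
      by (intro tendsto_intros z0 d0)
    hence "(\<lambda>k. y m) \<longlonglongrightarrow> 0" by simp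
    thus ?thesis using LIMSEQ_const_iff by blast
  qed
  have "(\<lambda>k. l2norm (R (ebasis (u k)))) \<longlonglongrightarrow> 0" using ry(3) y0 unfolding u_def by simp
  moreover have "\<forall>k. \<epsilon> \<le> l2norm (R (ebasis (u k)))" using q(2) unfolding A_def u_def by blast
  ultimately have "\<epsilon> \<le> 0" using LIMSEQ_le_const by blast
  thus False using \<epsilon>(1) by simp
qed

lemma pairsum: fixes K :: nat and x :: "nat \<Rightarrow> complex" shows "(\<Sum>m<2*K. (cmod (x (2*(m div 2))))\<^sup>2 + (cmod (x (2*(m div 2)+1)))\<^sup>2) = 2 * (\<Sum>m<2*K. (cmod (x m))\<^sup>2)"
proof (induction K)
  case (Suc K)
  have e: "2 * Suc K = Suc (Suc (2*K))" by simp
  have a: "(2*K) div 2 = K" "Suc (2*K) div 2 = K" by auto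
  show ?case unfolding e sum.lessThan_Suc using Suc.IH a by simp
qed simp

lemma block_tail:
  fixes g :: "nat \<Rightarrow> nat \<Rightarrow> complex"
  assumes rep: "\<forall>x\<in>l2. \<forall>m. C x m = g m 0 * x (2*(m div 2)) + g m 1 * x (2*(m div 2)+1)"
    and gz: "\<And>\<delta>. \<delta> > 0 \<Longrightarrow> \<exists>N. \<forall>m\<ge>N. \<forall>j<2. cmod (g m j) \<le> \<delta>"
    and \<epsilon>: "\<epsilon> > 0"
  shows "\<exists>N. \<forall>x\<in>l2. \<forall>M. (\<Sum>m\<in>{N..<M}. (cmod (C x m))\<^sup>2) \<le> \<epsilon> * (l2norm x)\<^sup>2"
proof -
  define \<delta> where "\<delta> = min 1 (\<epsilon> / 4)"
  have \<delta>: "\<delta> > 0" "\<delta> \<le> 1" "\<delta> \<le> \<epsilon> / 4" using \<epsilon> by (auto simp: \<delta>_def)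
  have \<delta>2: "4 * \<delta>\<^sup>2 \<le> \<epsilon>"
  proof -
    have "\<delta>\<^sup>2 \<le> \<delta>" using \<delta> by (simp add: power2_eq_square mult_left_le_one_le)
    thus ?thesis using \<delta> by linarith
  qed
  obtain N where N: "\<forall>m\<ge>N. \<forall>j<2. cmod (g m j) \<le> \<delta>" using gz[OF \<delta>(1)] by blast
  show ?thesis
  proof (intro exI ballI allI)
    fix x M assume x: "x \<in> l2"
    define w where "w m = (cmod (x (2*(m div 2))))\<^sup>2 + (cmod (x (2*(m div 2)+1)))\<^sup>2" for m
    have w0: "w m \<ge> 0" for m unfolding w_def by simp
    have pt: "(cmod (C x m))\<^sup>2 \<le> 2 * \<delta>\<^sup>2 * w m" if m: "m \<ge> N" for m
    proof -
      have g0: "cmod (g m 0) \<le> \<delta>" and g1: "cmod (g m 1) \<le> \<delta>" using N m by auto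
      have "(cmod (C x m))\<^sup>2 \<le> 2 * (cmod (g m 0 * x (2*(m div 2))))\<^sup>2 + 2 * (cmod (g m 1 * x (2*(m div 2)+1)))\<^sup>2"
        using rep x sq_add_le by metis
      also have "\<dots> = 2 * ((cmod (g m 0))\<^sup>2 * (cmod (x (2*(m div 2))))\<^sup>2) + 2 * ((cmod (g m 1))\<^sup>2 * (cmod (x (2*(m div 2)+1)))\<^sup>2)"
        by (simp add: norm_mult power_mult_distrib)
      also have "\<dots> \<le> 2 * (\<delta>\<^sup>2 * (cmod (x (2*(m div 2))))\<^sup>2) + 2 * (\<delta>\<^sup>2 * (cmod (x (2*(m div 2)+1)))\<^sup>2)"
        using g0 g1 by (intro add_mono mult_left_mono mult_right_mono power_mono) auto
      also have "\<dots> = 2 * \<delta>\<^sup>2 * w m" by (simp add: w_def algebra_simps)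
      finally show ?thesis .
    qed
    have "(\<Sum>m\<in>{N..<M}. (cmod (C x m))\<^sup>2) \<le> (\<Sum>m\<in>{N..<M}. 2 * \<delta>\<^sup>2 * w m)"
      by (rule sum_mono) (use pt in auto)
    also have "\<dots> \<le> (\<Sum>m<2*M. 2 * \<delta>\<^sup>2 * w m)"
      by (rule sum_mono2) (use w0 in auto)
    also have "\<dots> = 2 * \<delta>\<^sup>2 * (2 * (\<Sum>m<2*M. (cmod (x m))\<^sup>2))"
      unfolding sum_distrib_left[symmetric] w_def pairsum ..
    also have "\<dots> \<le> 2 * \<delta>\<^sup>2 * (2 * (l2norm x)\<^sup>2)"
      using l2_partial_le[OF x, of "{..<2*M}"] by (intro mult_left_mono) auto
    also have "\<dots> = (4 * \<delta>\<^sup>2) * (l2norm x)\<^sup>2" by simp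
    also have "\<dots> \<le> \<epsilon> * (l2norm x)\<^sup>2" using \<delta>2 by (intro mult_right_mono) auto
    finally show "(\<Sum>m\<in>{N..<M}. (cmod (C x m))\<^sup>2) \<le> \<epsilon> * (l2norm x)\<^sup>2" .
  qed
qed

lemma comm_bounded:
  assumes S: "bounded_op S" and T: "bounded_op T"
  shows "bounded_op (\<lambda>x n. S (T x) n - T (S x) n)"
proof -
  obtain CS where CS: "CS \<ge> 0" "\<forall>x\<in>l2. S x \<in> l2 \<and> l2norm (S x) \<le> CS * l2norm x" using bounded_opD[OF S] by blast
  obtain CT where CT: "CT \<ge> 0" "\<forall>x\<in>l2. T x \<in> l2 \<and> l2norm (T x) \<le> CT * l2norm x" using bounded_opD[OF T] by blast
  have l2: "(\<lambda>n. S (T x) n - T (S x) n) \<in> l2" if x: "x \<in> l2" for x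
    using l2_diff CS CT x by blast
  have add: "(\<lambda>n. S (T (\<lambda>n. x n + y n)) n - T (S (\<lambda>n. x n + y n)) n) =
     (\<lambda>n. (S (T x) n - T (S x) n) + (S (T y) n - T (S y) n))" if "x \<in> l2" "y \<in> l2" for x y
  proof -
    have "S (T (\<lambda>n. x n + y n)) = (\<lambda>n. S (T x) n + S (T y) n)"
      using bop_add[OF T that] bop_add[OF S bop_l2[OF T that(1)] bop_l2[OF T that(2)]] by simp
    moreover have "T (S (\<lambda>n. x n + y n)) = (\<lambda>n. T (S x) n + T (S y) n)"
      using bop_add[OF S that] bop_add[OF T bop_l2[OF S that(1)] bop_l2[OF S that(2)]] by simp
    ultimately show ?thesis by (simp add: algebra_simps)
  qed
  have scl: "(\<lambda>n. S (T (\<lambda>n. c * x n)) n - T (S (\<lambda>n. c * x n)) n) =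
     (\<lambda>n. c * (S (T x) n - T (S x) n))" if "x \<in> l2" for x c
  proof -
    have "S (T (\<lambda>n. c * x n)) = (\<lambda>n. c * S (T x) n)"
      using bop_scale[OF T that] bop_scale[OF S bop_l2[OF T that]] by simp
    moreover have "T (S (\<lambda>n. c * x n)) = (\<lambda>n. c * T (S x) n)"
      using bop_scale[OF S that] bop_scale[OF T bop_l2[OF S that]] by simp
    ultimately show ?thesis by (simp add: algebra_simps)
  qed
  have bnd: "l2norm (\<lambda>n. S (T x) n - T (S x) n) \<le> (2 * (CS * CT)) * l2norm x" if x: "x \<in> l2" for x
  proof -
    have a: "S (T x) \<in> l2" "T (S x) \<in> l2" using CS CT x by blast+
    have na: "l2norm (S (T x)) \<le> CS * CT * l2norm x"
    proof -
      have "l2norm (S (T x)) \<le> CS * l2norm (T x)" using CS CT x by blast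
      also have "\<dots> \<le> CS * (CT * l2norm x)" using CS CT x by (intro mult_left_mono) auto
      finally show ?thesis by simp
    qed
    have nb: "l2norm (T (S x)) \<le> CS * CT * l2norm x"
    proof -
      have "l2norm (T (S x)) \<le> CT * l2norm (S x)" using CS CT x by blast
      also have "\<dots> \<le> CT * (CS * l2norm x)" using CS CT x by (intro mult_left_mono) auto
      finally show ?thesis by (simp add: mult_ac)
    qed
    have "(\<Sum>m<M. (cmod (S (T x) m - T (S x) m))\<^sup>2) \<le> 2 * (l2norm (S (T x)))\<^sup>2 + 2 * (l2norm (T (S x)))\<^sup>2" for M
    proof -
      have "(\<Sum>m<M. (cmod (S (T x) m - T (S x) m))\<^sup>2) \<le> (\<Sum>m<M. 2 * (cmod (S (T x) m))\<^sup>2 + 2 * (cmod (T (S x) m))\<^sup>2)"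
        by (rule sum_mono) (rule sq_diff_le)
      also have "\<dots> = 2 * (\<Sum>m<M. (cmod (S (T x) m))\<^sup>2) + 2 * (\<Sum>m<M. (cmod (T (S x) m))\<^sup>2)"
        by (simp add: sum.distrib sum_distrib_left)
      also have "\<dots> \<le> 2 * (l2norm (S (T x)))\<^sup>2 + 2 * (l2norm (T (S x)))\<^sup>2"
        using l2_partial_le[OF a(1), of "{..<M}"] l2_partial_le[OF a(2), of "{..<M}"] by simp
      finally show ?thesis .
    qed
    hence "(l2norm (\<lambda>n. S (T x) n - T (S x) n))\<^sup>2 \<le> 2 * (l2norm (S (T x)))\<^sup>2 + 2 * (l2norm (T (S x)))\<^sup>2"
      by (rule l2I_bound(2))
    also have "\<dots> \<le> 2 * (CS * CT * l2norm x)\<^sup>2 + 2 * (CS * CT * l2norm x)\<^sup>2"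
      using na nb l2norm_nonneg[OF a(1)] l2norm_nonneg[OF a(2)] by (intro add_mono mult_left_mono power_mono) auto
    also have "\<dots> = ((2 * (CS * CT)) * l2norm x)\<^sup>2" by (simp add: power2_eq_square algebra_simps)
    finally have sq: "(l2norm (\<lambda>n. S (T x) n - T (S x) n))\<^sup>2 \<le> ((2 * (CS * CT)) * l2norm x)\<^sup>2" .
    have nn: "0 \<le> (2 * (CS * CT)) * l2norm x"
      using l2norm_nonneg[OF x] CS(1) CT(1) by simp
    show ?thesis by (rule power2_le_imp_le[OF sq nn])
  qed
  have A1: "\<forall>x\<in>l2. (\<lambda>n. S (T x) n - T (S x) n) \<in> l2" using l2 by blast
  have A2: "\<forall>x\<in>l2. \<forall>y\<in>l2. (\<lambda>n. S (T (\<lambda>n. x n + y n)) n - T (S (\<lambda>n. x n + y n)) n) =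
     (\<lambda>n. (S (T x) n - T (S x) n) + (S (T y) n - T (S y) n))" using add by blast
  have A3: "\<forall>x\<in>l2. \<forall>c. (\<lambda>n. S (T (\<lambda>n. c * x n)) n - T (S (\<lambda>n. c * x n)) n) =
     (\<lambda>n. c * (S (T x) n - T (S x) n))" using scl by blast
  have A4: "\<exists>C. \<forall>x\<in>l2. l2norm (\<lambda>n. S (T x) n - T (S x) n) \<le> C * l2norm x" using bnd by blast
  show ?thesis unfolding bounded_op_def
    using A1 A2 A3 A4 by (intro conjI) (assumption | blast)+
qed

lemma div2_add [simp]: "a < 2 \<Longrightarrow> (2*n + a) div 2 = (n::nat)"
  by auto

lemma entry_bound:
  assumes "bounded_op Q"
  shows "\<exists>B\<ge>0. \<forall>k m. cmod (Q (ebasis k) m) \<le> B"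
proof -
  obtain C where C: "C \<ge> 0" "\<forall>x\<in>l2. Q x \<in> l2 \<and> l2norm (Q x) \<le> C * l2norm x"
    using bounded_opD[OF assms] by blast
  have "cmod (Q (ebasis k) m) \<le> C" for k m
  proof -
    have "cmod (Q (ebasis k) m) \<le> l2norm (Q (ebasis k))" using l2_coord_le C(2) ebasis_l2 by blast
    also have "\<dots> \<le> C" using C(2) ebasis_l2 l2norm_ebasis by fastforce
    finally show ?thesis .
  qed
  thus ?thesis using C(1) by blast
qed

lemma r_small:
  assumes "compact_op R" "blockop R" "\<eta> > 0"
  shows "\<exists>N. \<forall>k\<ge>N. \<forall>m. cmod (R (ebasis k) m) \<le> \<eta>"
proof -
  have Rb: "bounded_op R" using assms(1) compact_op_def by blast
  obtain N where N: "\<forall>k\<ge>N. norm (l2norm (R (ebasis k)) - 0) < \<eta>"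
    using compact_basis_to_0[OF assms(1,2)] assms(3) unfolding LIMSEQ_iff by blast
  have "cmod (R (ebasis k) m) \<le> \<eta>" if "k \<ge> N" for k m
  proof -
    have "cmod (R (ebasis k) m) \<le> l2norm (R (ebasis k))" using l2_coord_le bop_l2[OF Rb ebasis_l2] by blast
    also have "\<dots> \<le> \<eta>" using N that by auto
    finally show ?thesis .
  qed
  thus ?thesis by blast
qed

definition FF :: "real \<Rightarrow> nat \<Rightarrow> complex" where
  "FF a x = (if x = 0 then of_real a else of_real (sqrt (1 - a\<^sup>2)))"
definition GG :: "real \<Rightarrow> nat \<Rightarrow> complex" where
  "GG a x = (if x = 0 then of_real (sqrt (1 - a\<^sup>2)) else - of_real a)"

lemma decomp:
  assumes S: "S \<in> A0" and DK: "(\<lambda>x. Pproj X (S (Pproj X x))) \<in> DKset X a" and a: "a\<^sup>2 \<le> 1"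
  shows "\<exists>D R. bounded_op D \<and> compact_op R \<and> blockop R \<and>
    (\<forall>n\<in>X. \<forall>x<2. \<forall>y<2. S (ebasis (2*n+y)) (2*n+x) = D (ebasis (2*n+y)) (2*n+x) + R (ebasis (2*n+y)) (2*n+x)) \<and>
    (\<forall>n\<in>X. \<exists>c \<mu>. \<forall>x<2. \<forall>y<2. D (ebasis (2*n+y)) (2*n+x) = c * FF a x * FF a y + \<mu> * GG a x * GG a y)"
proof -
  obtain D R where DR: "D \<in> Dset X a" "compact_op R" "R \<in> A0X X"
    "\<forall>x\<in>l2. Pproj X (S (Pproj X x)) = (\<lambda>n. D x n + R x n)"
    using DK unfolding DKset_def by blast
  have Db: "bounded_op D" using DR(1) unfolding Dset_def A0X_def A0_def by blast
  have Rbl: "blockop R" using DR(3) A0_blockop unfolding A0X_def by blast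
  define b where "b = sqrt (1 - a\<^sup>2)"
  have h: "a\<^sup>2 + b\<^sup>2 = 1" using a by (simp add: b_def)
  have part1: "S (ebasis (2*n+y)) (2*n+x) = D (ebasis (2*n+y)) (2*n+x) + R (ebasis (2*n+y)) (2*n+x)"
    if n: "n \<in> X" and x: "x < 2" and y: "y < 2" for n x y
  proof -
    have P: "Pproj X (ebasis (2*n+y)) = ebasis (2*n+y)"
      using n y by (auto simp: Pproj_def ebasis_def)
    have "Pproj X (S (ebasis (2*n+y))) = (\<lambda>m. D (ebasis (2*n+y)) m + R (ebasis (2*n+y)) m)"
      using DR(4) ebasis_l2[of "2*n+y"] P by metis
    hence "Pproj X (S (ebasis (2*n+y))) (2*n+x) = D (ebasis (2*n+y)) (2*n+x) + R (ebasis (2*n+y)) (2*n+x)"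
      by simp
    thus ?thesis using n x by (simp add: Pproj_def)
  qed
  have part2: "\<exists>c \<mu>. \<forall>x<2. \<forall>y<2. D (ebasis (2*n+y)) (2*n+x) = c * FF a x * FF a y + \<mu> * GG a x * GG a y"
    if n: "n \<in> X" for n
  proof -
    obtain c where c: "D (fvec a (2*n)) = (\<lambda>m. c * fvec a (2*n) m)"
      using DR(1) n unfolding Dset_def by blast
    obtain \<mu> where \<mu>: "D (fvec a (2*n+1)) = (\<lambda>m. \<mu> * fvec a (2*n+1) m)"
      using DR(1) n unfolding Dset_def by blast
    have f0: "fvec a (2*n) = (\<lambda>m. (\<lambda>m. of_real a * ebasis (2*n) m) m + (\<lambda>m. of_real b * ebasis (2*n+1) m) m)"
      by (simp add: fvec_def b_def)
    have f1: "fvec a (2*n+1) = (\<lambda>m. (\<lambda>m. of_real b * ebasis (2*n) m) m + (\<lambda>m. (- of_real a) * ebasis (2*n+1) m) m)"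
      by (simp add: fvec_def b_def)
    have Df0: "D (fvec a (2*n)) = (\<lambda>m. of_real a * D (ebasis (2*n)) m + of_real b * D (ebasis (2*n+1)) m)"
      unfolding f0 by (simp add: bop_add[OF Db l2_scale[OF ebasis_l2] l2_scale[OF ebasis_l2]] bop_scale[OF Db ebasis_l2])
    have Df1: "D (fvec a (2*n+1)) = (\<lambda>m. of_real b * D (ebasis (2*n)) m + (- of_real a) * D (ebasis (2*n+1)) m)"
      unfolding f1 by (simp only: bop_add[OF Db l2_scale[OF ebasis_l2] l2_scale[OF ebasis_l2]] bop_scale[OF Db ebasis_l2])
    define d where "d x y = D (ebasis (2*n+y)) (2*n+x)" for x y
    have fv0: "fvec a (2*n) (2*n+x) = FF a x" if "x < 2" for x
      using that by (cases "x = 0") (auto simp: fvec_def FF_def ebasis_def)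
    have fv1: "fvec a (2*n+1) (2*n+x) = GG a x" if "x < 2" for x
      using that by (cases "x = 0") (auto simp: fvec_def GG_def ebasis_def)
    have e1: "of_real a * d x 0 + of_real b * d x 1 = c * FF a x" if "x < 2" for x
      using fun_cong[OF trans[OF Df0[symmetric] c], of "2*n+x"] fv0[OF that] by (simp add: d_def)
    have e2: "of_real b * d x 0 - of_real a * d x 1 = \<mu> * GG a x" if "x < 2" for x
      using fun_cong[OF trans[OF Df1[symmetric] \<mu>], of "2*n+x"] fv1[OF that] by (simp add: d_def)
    have "D (ebasis (2*n+y)) (2*n+x) = c * FF a x * FF a y + \<mu> * GG a x * GG a y"
      if x: "x < 2" and y: "y < 2" for x y
    proof -
      have d0: "d x 0 = c * of_real a * FF a x + \<mu> * of_real b * GG a x"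
        by (rule eig_formula(1)[where d=d and a=x, OF h e1[OF x] e2[OF x]])
      have d1: "d x 1 = c * of_real b * FF a x - \<mu> * of_real a * GG a x"
        by (rule eig_formula(2)[where d=d and a=x, OF h e1[OF x] e2[OF x]])
      show ?thesis
      proof (cases "y = 0")
        case True
        thus ?thesis using d0 by (simp add: d_def FF_def GG_def b_def mult_ac)
      next
        case False
        hence "y = 1" using y by simp
        thus ?thesis using d1 by (simp add: d_def FF_def GG_def b_def mult_ac)
      qed
    qed
    thus ?thesis by blast
  qed
  show ?thesis using Db DR(2) Rbl part1 part2 by blast
qed

theorem lemma4p13:
  fixes \<X> :: "nat set set" and \<alpha> :: "nat set \<Rightarrow> real"
    and S T :: "(nat \<Rightarrow> complex) \<Rightarrow> (nat \<Rightarrow> complex)"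
  assumes "wide \<X>"
    and "\<forall>X\<in>\<X>. 71/72 < \<alpha> X \<and> \<alpha> X \<le> 1"
    and "S \<in> Mset \<X> \<alpha>" and "T \<in> Mset \<X> \<alpha>"
  shows "compact_op (\<lambda>x n. S (T x) n - T (S x) n)"
proof -
  have SA: "S \<in> A0" and TA: "T \<in> A0" using assms(3,4) unfolding Mset_def by auto
  have Sb: "bounded_op S" and Tb: "bounded_op T" using SA TA A0_bounded by auto
  have Sbl: "blockop S" and Tbl: "blockop T" using SA TA A0_blockop by auto
  define gam where "gam m j =
     S (ebasis (2*(m div 2))) m * T (ebasis (2*(m div 2) + j)) (2*(m div 2))
   + S (ebasis (2*(m div 2)+1)) m * T (ebasis (2*(m div 2) + j)) (2*(m div 2)+1)
   - (T (ebasis (2*(m div 2))) m * S (ebasis (2*(m div 2) + j)) (2*(m div 2))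
   + T (ebasis (2*(m div 2)+1)) m * S (ebasis (2*(m div 2) + j)) (2*(m div 2)+1))" for m :: nat and j :: nat
  have rep: "\<forall>x\<in>l2. \<forall>m::nat. S (T x) m - T (S x) m = gam m 0 * x (2*(m div 2)) + gam m 1 * x (2*(m div 2)+1)"
  proof (intro ballI allI)
    fix x and m :: nat assume x: "x \<in> l2"
    define p where "p = m div 2"
    have Tx: "T x \<in> l2" and Sx: "S x \<in> l2" using bop_l2 Sb Tb x by auto
    have "S (T x) m = S (ebasis (2*p)) m * T x (2*p) + S (ebasis (2*p+1)) m * T x (2*p+1)"
      using bop_rep[OF Sb Sbl Tx, of m] by (simp add: p_def)
    also have "T x (2*p) = T (ebasis (2*p)) (2*p) * x (2*p) + T (ebasis (2*p+1)) (2*p) * x (2*p+1)"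
      using bop_rep[OF Tb Tbl x, of "2*p"] by simp
    also have "T x (2*p+1) = T (ebasis (2*p)) (2*p+1) * x (2*p) + T (ebasis (2*p+1)) (2*p+1) * x (2*p+1)"
      using bop_rep[OF Tb Tbl x, of "2*p+1"] by simp
    finally have 1: "S (T x) m = S (ebasis (2*p)) m * (T (ebasis (2*p)) (2*p) * x (2*p) + T (ebasis (2*p+1)) (2*p) * x (2*p+1))
       + S (ebasis (2*p+1)) m * (T (ebasis (2*p)) (2*p+1) * x (2*p) + T (ebasis (2*p+1)) (2*p+1) * x (2*p+1))" .
    have "T (S x) m = T (ebasis (2*p)) m * S x (2*p) + T (ebasis (2*p+1)) m * S x (2*p+1)"
      using bop_rep[OF Tb Tbl Sx, of m] by (simp add: p_def)
    also have "S x (2*p) = S (ebasis (2*p)) (2*p) * x (2*p) + S (ebasis (2*p+1)) (2*p) * x (2*p+1)"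
      using bop_rep[OF Sb Sbl x, of "2*p"] by simp
    also have "S x (2*p+1) = S (ebasis (2*p)) (2*p+1) * x (2*p) + S (ebasis (2*p+1)) (2*p+1) * x (2*p+1)"
      using bop_rep[OF Sb Sbl x, of "2*p+1"] by simp
    finally have 2: "T (S x) m = T (ebasis (2*p)) m * (S (ebasis (2*p)) (2*p) * x (2*p) + S (ebasis (2*p+1)) (2*p) * x (2*p+1))
       + T (ebasis (2*p+1)) m * (S (ebasis (2*p)) (2*p+1) * x (2*p) + S (ebasis (2*p+1)) (2*p+1) * x (2*p+1))" .
    show "S (T x) m - T (S x) m = gam m 0 * x (2*(m div 2)) + gam m 1 * x (2*(m div 2)+1)"
      unfolding 1 2 gam_def p_def[symmetric] by (simp add: algebra_simps)
  qed
  have perX: "\<exists>N. \<forall>n\<in>X. n \<ge> N \<longrightarrow> (\<forall>a<2. \<forall>j<2. cmod (gam (2*n+a) j) \<le> \<delta>)"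
    if X: "X \<in> \<X>" and \<delta>: "\<delta> > 0" for X \<delta>
  proof -
    define a' where "a' = \<alpha> X"
    have a'1: "0 \<le> a'" "a' \<le> 1" using assms(2) X unfolding a'_def by force+
    have a'2: "a'\<^sup>2 \<le> 1" using a'1 by (simp add: power_le_one)
    have DKS: "(\<lambda>x. Pproj X (S (Pproj X x))) \<in> DKset X a'" using assms(3) X unfolding Mset_def a'_def by blast
    have DKT: "(\<lambda>x. Pproj X (T (Pproj X x))) \<in> DKset X a'" using assms(4) X unfolding Mset_def a'_def by blast
    obtain DS RS where DS: "bounded_op DS" "compact_op RS" "blockop RS"
      "\<forall>n\<in>X. \<forall>x<2. \<forall>y<2. S (ebasis (2*n+y)) (2*n+x) = DS (ebasis (2*n+y)) (2*n+x) + RS (ebasis (2*n+y)) (2*n+x)"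
      "\<forall>n\<in>X. \<exists>c \<mu>. \<forall>x<2. \<forall>y<2. DS (ebasis (2*n+y)) (2*n+x) = c * FF a' x * FF a' y + \<mu> * GG a' x * GG a' y"
      using decomp[OF SA DKS a'2] by blast
    obtain DT RT where DT: "bounded_op DT" "compact_op RT" "blockop RT"
      "\<forall>n\<in>X. \<forall>x<2. \<forall>y<2. T (ebasis (2*n+y)) (2*n+x) = DT (ebasis (2*n+y)) (2*n+x) + RT (ebasis (2*n+y)) (2*n+x)"
      "\<forall>n\<in>X. \<exists>c \<mu>. \<forall>x<2. \<forall>y<2. DT (ebasis (2*n+y)) (2*n+x) = c * FF a' x * FF a' y + \<mu> * GG a' x * GG a' y"
      using decomp[OF TA DKT a'2] by blast
    obtain BS where BS: "BS \<ge> 0" "\<forall>k m. cmod (S (ebasis k) m) \<le> BS" using entry_bound[OF Sb] by blast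
    obtain BT where BT: "BT \<ge> 0" "\<forall>k m. cmod (T (ebasis k) m) \<le> BT" using entry_bound[OF Tb] by blast
    obtain BDS where BDS: "BDS \<ge> 0" "\<forall>k m. cmod (DS (ebasis k) m) \<le> BDS" using entry_bound[OF DS(1)] by blast
    obtain BDT where BDT: "BDT \<ge> 0" "\<forall>k m. cmod (DT (ebasis k) m) \<le> BDT" using entry_bound[OF DT(1)] by blast
    define B where "B = BS + BT + BDS + BDT"
    have B0: "B \<ge> 0" using BS BT BDS BDT by (simp add: B_def)
    define \<eta> where "\<eta> = \<delta> / (8 * B + 1)"
    have \<eta>: "\<eta> > 0" using \<delta> B0 by (simp add: \<eta>_def)
    have B\<eta>: "8 * B * \<eta> \<le> \<delta>"
    proof -
      have "8 * B * \<eta> = \<delta> * (8 * B / (8 * B + 1))" using B0 by (simp add: \<eta>_def field_simps)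
      also have "\<dots> \<le> \<delta> * 1" using B0 \<delta> by (intro mult_left_mono) auto
      finally show ?thesis by simp
    qed
    obtain NS where NS: "\<forall>k\<ge>NS. \<forall>m. cmod (RS (ebasis k) m) \<le> \<eta>" using r_small[OF DS(2,3) \<eta>] by blast
    obtain NT where NT: "\<forall>k\<ge>NT. \<forall>m. cmod (RT (ebasis k) m) \<le> \<eta>" using r_small[OF DT(2,3) \<eta>] by blast
    have "\<forall>a<2. \<forall>j<2. cmod (gam (2*n+a) j) \<le> \<delta>" if n: "n \<in> X" "n \<ge> NS + NT" for n
    proof (intro allI impI)
      fix a j :: nat assume a: "a < 2" and j: "j < 2"
      define s where "s x y = S (ebasis (2*n+y)) (2*n+x)" for x y
      define t where "t x y = T (ebasis (2*n+y)) (2*n+x)" for x y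
      define d where "d x y = DS (ebasis (2*n+y)) (2*n+x)" for x y
      define d' where "d' x y = DT (ebasis (2*n+y)) (2*n+x)" for x y
      define r where "r x y = RS (ebasis (2*n+y)) (2*n+x)" for x y
      define r' where "r' x y = RT (ebasis (2*n+y)) (2*n+x)" for x y
      obtain c \<mu> where c: "\<forall>x<2. \<forall>y<2. d x y = c * FF a' x * FF a' y + \<mu> * GG a' x * GG a' y"
        using DS(5) n(1) unfolding d_def by blast
      obtain c' \<mu>' where c': "\<forall>x<2. \<forall>y<2. d' x y = c' * FF a' x * FF a' y + \<mu>' * GG a' x * GG a' y"
        using DT(5) n(1) unfolding d'_def by blast
      have fg: "FF a' 0 * GG a' 0 + FF a' 1 * GG a' 1 = 0" by (simp add: FF_def GG_def)
      have cm: "d a 0 * d' 0 j + d a 1 * d' 1 j = d' a 0 * d 0 j + d' a 1 * d 1 j"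
        by (rule comm_formula[OF c c' fg a j])
      have st: "\<forall>x<2. \<forall>y<2. s x y = d x y + r x y \<and> t x y = d' x y + r' x y"
        using DS(4) DT(4) n(1) unfolding s_def t_def d_def d'_def r_def r'_def by blast
      have bd: "\<forall>x<2. \<forall>y<2. cmod (s x y) \<le> B \<and> cmod (t x y) \<le> B \<and> cmod (d x y) \<le> B \<and> cmod (d' x y) \<le> B"
      proof (intro allI impI conjI)
        fix x y :: nat
        show "cmod (s x y) \<le> B" using BS BT BDS BDT unfolding s_def B_def by (smt (verit))
        show "cmod (t x y) \<le> B" using BS BT BDS BDT unfolding t_def B_def by (smt (verit))
        show "cmod (d x y) \<le> B" using BS BT BDS BDT unfolding d_def B_def by (smt (verit))
        show "cmod (d' x y) \<le> B" using BS BT BDS BDT unfolding d'_def B_def by (smt (verit))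
      qed
      have sm: "\<forall>x<2. \<forall>y<2. cmod (r x y) \<le> \<eta> \<and> cmod (r' x y) \<le> \<eta>"
      proof (intro allI impI conjI)
        fix x y :: nat
        have "2*n+y \<ge> NS" "2*n+y \<ge> NT" using n(2) by auto
        thus "cmod (r x y) \<le> \<eta>" "cmod (r' x y) \<le> \<eta>" using NS NT unfolding r_def r'_def by auto
      qed
      have "cmod (s a 0 * t 0 j + s a 1 * t 1 j - (t a 0 * s 0 j + t a 1 * s 1 j)) \<le> 8 * B * \<eta>"
        by (rule comm_bound[OF st bd sm cm a j])
      moreover have "gam (2*n+a) j = s a 0 * t 0 j + s a 1 * t 1 j - (t a 0 * s 0 j + t a 1 * s 1 j)"
        unfolding gam_def s_def t_def using a by simp
      ultimately show "cmod (gam (2*n+a) j) \<le> \<delta>" using B\<eta> by simp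
    qed
    thus ?thesis by blast
  qed
  have gz: "\<exists>N. \<forall>m\<ge>N. \<forall>j<2. cmod (gam m j) \<le> \<delta>" if \<delta>: "\<delta> > 0" for \<delta>
  proof (rule ccontr)
    assume nt: "\<not> (\<exists>N. \<forall>m\<ge>N. \<forall>j<2. cmod (gam m j) \<le> \<delta>)"
    define A where "A = {n. \<exists>a<2. \<exists>j<2. \<not> cmod (gam (2*n+a) j) \<le> \<delta>}"
    have "infinite A" unfolding infinite_nat_iff_unbounded_le
    proof
      fix K
      have nt': "\<forall>N. \<exists>m\<ge>N. \<exists>j<2. \<not> cmod (gam m j) \<le> \<delta>" using nt by blast
      obtain m j where m: "m \<ge> 2*K" "j < 2" "\<not> cmod (gam m j) \<le> \<delta>" using spec[OF nt', of "2*K"] by blast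
      have e: "2*(m div 2) + m mod 2 = m" by simp
      have "m mod 2 < 2 \<and> j < 2 \<and> \<not> cmod (gam (2*(m div 2) + m mod 2) j) \<le> \<delta>" using m(2,3) e by simp
      hence "m div 2 \<in> A" unfolding A_def by blast
      moreover have "m div 2 \<ge> K" using m(1) by auto
      ultimately show "\<exists>n\<ge>K. n \<in> A" by blast
    qed
    then obtain X where X: "X \<in> \<X>" "infinite (A \<inter> X)" using assms(1) unfolding wide_def by blast
    obtain N where N: "\<forall>n\<in>X. n \<ge> N \<longrightarrow> (\<forall>a<2. \<forall>j<2. cmod (gam (2*n+a) j) \<le> \<delta>)"
      using perX[OF X(1) \<delta>] by blast
    have "A \<inter> X \<subseteq> {..<N}"
    proof
      fix n assume n: "n \<in> A \<inter> X"
      then obtain a j where aj: "a < 2" "j < 2" "\<not> cmod (gam (2*n+a) j) \<le> \<delta>" unfolding A_def by blast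
      show "n \<in> {..<N}"
      proof (rule ccontr)
        assume "n \<notin> {..<N}"
        hence "n \<ge> N" by simp
        thus False using N n aj by blast
      qed
    qed
    hence "finite (A \<inter> X)" using finite_subset by blast
    thus False using X(2) by blast
  qed
  have tail: "\<exists>N. \<forall>x\<in>l2. \<forall>M. (\<Sum>m\<in>{N..<M}. (cmod (S (T x) m - T (S x) m))\<^sup>2) \<le> \<epsilon> * (l2norm x)\<^sup>2"
    if "\<epsilon> > 0" for \<epsilon>
    by (rule block_tail[where C = "\<lambda>x n. S (T x) n - T (S x) n" and g = gam, OF rep gz that]) 
  show ?thesis
    by (rule compact_crit[OF comm_bounded[OF Sb Tb]]) (use tail in simp)
qed

end
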